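(* Let $S,B\subseteq\{-1,1,*\}^X$ be binary hypothesis classes. For any $\varepsilon,\delta\ge0$ and $n\in\mathbb{Z}_{\ge0}$, every learner that solves agnostic learning $\mathsf{AgnL}_n(\mathbf{A}_{S,B},\varepsilon,\delta)$ also solves comparative learning $\mathsf{CompL}_n(S,B,\varepsilon,\delta)$; i.e. $\mathsf{AgnL}_n(\mathbf{A}_{S,B},\varepsilon,\delta)\subseteq\mathsf{CompL}_n(S,B,\varepsilon,\delta)$.
   Context: $X$ is a non-empty set; hypotheses are functions $X\to\{-1,1,*\}$; distributions are discrete. For $s,b:X\to\{-1,1,*\}$, the agreement hypothesis $\mathbf{a}_{s,b}:X\to\{-1,1,*\}$ is $\mathbf{a}_{s,b}(x)=-1$ if $s(x)=b(x)=-1$, $\mathbf{a}_{s,b}(x)=1$ if $s(x)=b(x)=1$, and $\mathbf{a}_{s,b}(x)=*$ otherwise; $\mathbf{A}_{S,B}=\{\mathbf{a}_{s,b}:s\in S,b\in B\}$. A learner takes $n$ data points in $X\times\{-1,1\}$ and outputs $f:X\to\{-1,1\}$ (possibly randomized). It belongs to $\mathsf{AgnL}_n(H,\varepsilon,\delta)$ if for every distribution $\mu$ on $X\times\{-1,1\}$, given $n$ i.i.d. samples from $\mu$, with probability $\ge1-\delta$ it outputs $f$ with $\Pr_\mu[f(x)\ne y]\le\inf_{h\in H}\Pr_\mu[h(x)\ne y]+\varepsilon$ (where $h(x)=*$ counts as an error). It belongs to $\mathsf{CompL}_n(S,B,\varepsilon,\delta)$ if the same guarantee holds with $H$ replaced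 by $B$, but only for distributions $\mu$ with $\Pr_\mu[s(x)=y]=1$ for some $s\in S$. *)

theory Defs
  imports "HOL-Probability.Probability"
begin

datatype sign = Neg | Pos

text \<open>Partial hypotheses X -> {-1,1,*}: the value None encodes *.\<close>
type_synonym 'x phyp = "'x \<Rightarrow> sign option"

definition agree :: "'x phyp \<Rightarrow> 'x phyp \<Rightarrow> 'x phyp" where
  "agree s b = (\<lambda>x. if s x = Some Neg \<and> b x = Some Neg then Some Neg
                    else if s x = Some Pos \<and> b x = Some Pos then Some Pos
                    else None)"

definition agree_class :: "'x phyp set \<Rightarrow> 'x phyp set \<Rightarrow> 'x phyp set" where
  "agree_class S B = {agree s b | s b. s \<in> S \<and> b \<in> B}"

text \<open>Error of a partial hypothesis (the value * always counts as an error).\<close>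
definition perr :: "('x \<times> sign) pmf \<Rightarrow> 'x phyp \<Rightarrow> real" where
  "perr \<mu> h = measure_pmf.prob \<mu> {(x, y). h x \<noteq> Some y}"

definition terr :: "('x \<times> sign) pmf \<Rightarrow> ('x \<Rightarrow> sign) \<Rightarrow> real" where
  "terr \<mu> f = measure_pmf.prob \<mu> {(x, y). f x \<noteq> y}"

type_synonym 'x learner = "('x \<times> sign) list \<Rightarrow> ('x \<Rightarrow> sign) pmf"

definition learner_output :: "nat \<Rightarrow> 'x learner \<Rightarrow> ('x \<times> sign) pmf \<Rightarrow> ('x \<Rightarrow> sign) pmf" where
  "learner_output n L \<mu> = bind_pmf (replicate_pmf n \<mu>) L"

text \<open>Success: error at most inf_{h in H} err(h) + eps (infimum in the extended reals,
  so that the infimum over the empty class is +infinity).\<close>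
definition good_for :: "('x \<times> sign) pmf \<Rightarrow> 'x phyp set \<Rightarrow> real \<Rightarrow> ('x \<Rightarrow> sign) \<Rightarrow> bool" where
  "good_for \<mu> H \<epsilon> f \<longleftrightarrow> ereal (terr \<mu> f) \<le> (INF h\<in>H. ereal (perr \<mu> h)) + ereal \<epsilon>"

definition AgnL :: "nat \<Rightarrow> 'x phyp set \<Rightarrow> real \<Rightarrow> real \<Rightarrow> 'x learner set" where
  "AgnL n H \<epsilon> \<delta> = {L. \<forall>\<mu> :: ('x \<times> sign) pmf.
      measure_pmf.prob (learner_output n L \<mu>) {f. good_for \<mu> H \<epsilon> f} \<ge> 1 - \<delta>}"

definition realizable :: "'x phyp set \<Rightarrow> ('x \<times> sign) pmf \<Rightarrow> bool" where
  "realizable S \<mu> \<longleftrightarrow> (\<exists>s\<in>S. measure_pmf.prob \<mu> {(x, y). s x = Some y} = 1)"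

definition CompL :: "nat \<Rightarrow> 'x phyp set \<Rightarrow> 'x phyp set \<Rightarrow> real \<Rightarrow> real \<Rightarrow> 'x learner set" where
  "CompL n S B \<epsilon> \<delta> = {L. \<forall>\<mu> :: ('x \<times> sign) pmf. realizable S \<mu> \<longrightarrow>
      measure_pmf.prob (learner_output n L \<mu>) {f. good_for \<mu> B \<epsilon> f} \<ge> 1 - \<delta>}"

end

theory Submission
  imports Defs
begin

lemma perr_agree_le:
  assumes E: "measure_pmf.prob \<mu> {(x, y). s x = Some y} = 1"
  shows "perr \<mu> (agree s b) \<le> perr \<mu> b"
proof -
  let ?E = "{(x, y). s x = Some y}"
  have c: "measure_pmf.prob \<mu> (UNIV - ?E) = 0"
    using measure_pmf.prob_compl[of ?E \<mu>] E by simp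
  have sub: "{(x, y). agree s b x \<noteq> Some y} \<subseteq> {(x, y). b x \<noteq> Some y} \<union> (UNIV - ?E)"
    by (auto simp: agree_def split: if_splits) (metis sign.exhaust)+
  have "perr \<mu> (agree s b) \<le> measure_pmf.prob \<mu> ({(x, y). b x \<noteq> Some y} \<union> (UNIV - ?E))"
    unfolding perr_def using sub by (intro measure_pmf.finite_measure_mono) auto
  also have "\<dots> \<le> perr \<mu> b + measure_pmf.prob \<mu> (UNIV - ?E)"
    unfolding perr_def by (intro measure_subadditive) auto
  finally show ?thesis using c by simp
qed

theorem lemma3p6:
  fixes S B :: "'x phyp set" and \<epsilon> \<delta> :: real and n :: nat
  assumes "\<epsilon> \<ge> 0" and "\<delta> \<ge> 0"
  shows "AgnL n (agree_class S B) \<epsilon> \<delta> \<subseteq> CompL n S B \<epsilon> \<delta>"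
proof
  fix L assume L: "L \<in> AgnL n (agree_class S B) \<epsilon> \<delta>"
  show "L \<in> CompL n S B \<epsilon> \<delta>"
    unfolding CompL_def
  proof (intro CollectI allI impI)
    fix \<mu> :: "('x \<times> sign) pmf"
    assume "realizable S \<mu>"
    then obtain s where s: "s \<in> S" and E: "measure_pmf.prob \<mu> {(x, y). s x = Some y} = 1"
      unfolding realizable_def by blast
    have inf: "(INF h\<in>agree_class S B. ereal (perr \<mu> h)) \<le> (INF h\<in>B. ereal (perr \<mu> h))"
    proof (rule INF_greatest)
      fix b assume b: "b \<in> B"
      have "agree s b \<in> agree_class S B" using s b unfolding agree_class_def by blast
      hence "(INF h\<in>agree_class S B. ereal (perr \<mu> h)) \<le> ereal (perr \<mu> (agree s b))"
        by (rule INF_lower)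
      also have "\<dots> \<le> ereal (perr \<mu> b)" using perr_agree_le[OF E] by simp
      finally show "(INF h\<in>agree_class S B. ereal (perr \<mu> h)) \<le> ereal (perr \<mu> b)" .
    qed
    have sub: "{f. good_for \<mu> (agree_class S B) \<epsilon> f} \<subseteq> {f. good_for \<mu> B \<epsilon> f}"
      unfolding good_for_def using inf add_right_mono order_trans by blast
    have "1 - \<delta> \<le> measure_pmf.prob (learner_output n L \<mu>) {f. good_for \<mu> (agree_class S B) \<epsilon> f}"
      using L unfolding AgnL_def by blast
    also have "\<dots> \<le> measure_pmf.prob (learner_output n L \<mu>) {f. good_for \<mu> B \<epsilon> f}"
      using sub by (intro measure_pmf.finite_measure_mono) auto
    finally show "1 - \<delta> \<le> measure_pmf.prob (learner_output n L \<mu>) {f. good_for \<mu> B \<epsilon> f}" .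
  qed
qed

end
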